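(* Let $\mathcal{A}$ be a finite set of arms, $1\le B\le|\mathcal{A}|$, and fix a sequence of cost functions $c_1,\dots,c_T:\mathcal{A}\to[0,1]$. For $t\ge 0$ let $a_t^{*,j}$ be the $j$-th lowest cumulative cost arm after the first $t$ rounds, i.e. ordered by $\sum_{s=1}^t c_s(a)$ with ties broken arbitrarily, and let $S_t^*:=\{a_{t-1}^{*,j}: j\in[B]\}$ be the set of the $B$ lowest cumulative cost arms at the end of round $t-1$. For $i\in\{0,\dots,T\}$ define \[R_i:=\sum_{t=1}^i c_t(S_t^* )-\min_{a^*\in\mathcal{A}}\sum_{t=1}^i c_t(a^* ),\] where $c_t(S):=\min_{a\in S}c_t(a)$. Then for each $i\in[T]$, \[R_i\le\sum_{t=1}^i\mathbb{1}[a_t^{*,1}\notin S_t^*]\quad\text{and}\quad R_i-R_{i-1}\le\mathbb{1}[a_i^{*,1}\notin S_i^*].\] *)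

theory Defs
  imports Complex_Main
begin

definition cum_cost :: "(nat \<Rightarrow> 'a \<Rightarrow> real) \<Rightarrow> nat \<Rightarrow> 'a \<Rightarrow> real" where
  "cum_cost c t a = (\<Sum>s = 1..t. c s a)"

definition set_cost :: "(nat \<Rightarrow> 'a \<Rightarrow> real) \<Rightarrow> nat \<Rightarrow> 'a set \<Rightarrow> real" where
  "set_cost c t S = Min (c t ` S)"

definition is_ranking :: "'a set \<Rightarrow> (nat \<Rightarrow> 'a \<Rightarrow> real) \<Rightarrow> nat \<Rightarrow> (nat \<Rightarrow> 'a) \<Rightarrow> bool" where
  "is_ranking A c t r \<longleftrightarrow> bij_betw r {1..card A} A \<and>
     (\<forall>j\<in>{1..card A}. \<forall>k\<in>{1..card A}. j \<le> k \<longrightarrow> cum_cost c t (r j) \<le> cum_cost c t (r k))"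

definition S_star :: "(nat \<Rightarrow> nat \<Rightarrow> 'a) \<Rightarrow> nat \<Rightarrow> nat \<Rightarrow> 'a set" where
  "S_star rk B t = rk (t - 1) ` {1..B}"

definition regret_R :: "'a set \<Rightarrow> (nat \<Rightarrow> 'a \<Rightarrow> real) \<Rightarrow> (nat \<Rightarrow> nat \<Rightarrow> 'a) \<Rightarrow> nat \<Rightarrow> nat \<Rightarrow> real" where
  "regret_R A c rk B i = (\<Sum>t = 1..i. set_cost c t (S_star rk B t)) - Min (cum_cost c i ` A)"

end

theory Submission
  imports Defs
begin

lemma rank_min:
  assumes "finite A" "A \<noteq> {}" "is_ranking A c t r"
  shows "r 1 \<in> A \<and> Min (cum_cost c t ` A) = cum_cost c t (r 1)"
proof -
  have bij: "bij_betw r {1..card A} A" and ord: "\<forall>j\<in>{1..card A}. \<forall>k\<in>{1..card A}. j \<le> k \<longrightarrow> cum_cost c t (r j) \<le> cum_cost c t (r k)"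
    using assms(3) unfolding is_ranking_def by auto
  have cp: "card A \<ge> 1" using assms(1,2) by (simp add: Suc_leI card_gt_0_iff)
  have r1: "r 1 \<in> A" using bij cp unfolding bij_betw_def by auto
  have "\<forall>a\<in>A. cum_cost c t (r 1) \<le> cum_cost c t a"
  proof
    fix a assume "a \<in> A"
    then obtain j where "j \<in> {1..card A}" "a = r j" using bij unfolding bij_betw_def by (metis imageE)
    then show "cum_cost c t (r 1) \<le> cum_cost c t a" using ord cp by auto
  qed
  then have "Min (cum_cost c t ` A) = cum_cost c t (r 1)"
    using r1 assms(1) by (intro Min_eqI) auto
  then show ?thesis using r1 by simp
qed

lemma cum_step: "cum_cost c (Suc m) a = cum_cost c m a + c (Suc m) a"
  unfolding cum_cost_def by simp

lemma step:
  fixes A :: "'a set" and B T i :: nat and c :: "nat \<Rightarrow> 'a \<Rightarrow> real"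
    and rk :: "nat \<Rightarrow> nat \<Rightarrow> 'a"
  assumes "finite A"
    and "1 \<le> B" and "B \<le> card A"
    and "\<And>t a. t \<in> {1..T} \<Longrightarrow> a \<in> A \<Longrightarrow> 0 \<le> c t a \<and> c t a \<le> 1"
    and "\<And>t. t \<le> T \<Longrightarrow> is_ranking A c t (rk t)"
    and "i \<in> {1..T}"
  shows "regret_R A c rk B i - regret_R A c rk B (i - 1) \<le> of_bool (rk i 1 \<notin> S_star rk B i)"
proof -
  obtain m where im: "i = Suc m" using assms(6) by (cases i) auto
  have Ane: "A \<noteq> {}" using assms(2,3) by auto
  have mi: "rk i 1 \<in> A" "Min (cum_cost c i ` A) = cum_cost c i (rk i 1)"
    using rank_min[OF assms(1) Ane assms(5)] assms(6) by auto
  have mm: "rk m 1 \<in> A" "Min (cum_cost c m ` A) = cum_cost c m (rk m 1)"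
    using rank_min[OF assms(1) Ane assms(5)] assms(6) im by auto
  have "cum_cost c m (rk m 1) \<le> cum_cost c m (rk i 1)"
    using mm mi(1) assms(1) by (metis Min_le finite_imageI imageI)
  then have key: "Min (cum_cost c i ` A) - Min (cum_cost c m ` A) \<ge> c i (rk i 1)"
    using mi mm im cum_step[of c m] by simp
  have bij: "bij_betw (rk m) {1..card A} A" using assms(5)[of m] assms(6) im unfolding is_ranking_def by auto
  have Ssub: "S_star rk B i \<subseteq> A" unfolding S_star_def using bij assms(3) im
    unfolding bij_betw_def by auto
  have Sne: "S_star rk B i \<noteq> {}" unfolding S_star_def using assms(2) by auto
  have Sfin: "finite (S_star rk B i)" unfolding S_star_def by simp
  have R: "regret_R A c rk B i - regret_R A c rk B (i - 1) =
     set_cost c i (S_star rk B i) - (Min (cum_cost c i ` A) - Min (cum_cost c m ` A))"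
    unfolding regret_R_def using im by simp
  have c0: "0 \<le> c i (rk i 1)" using assms(4) assms(6) mi(1) by auto
  show ?thesis
  proof (cases "rk i 1 \<in> S_star rk B i")
    case True
    then have "set_cost c i (S_star rk B i) \<le> c i (rk i 1)"
      unfolding set_cost_def using Sfin by simp
    then show ?thesis using R key True by simp
  next
    case False
    obtain a where a: "a \<in> S_star rk B i" using Sne by auto
    then have "set_cost c i (S_star rk B i) \<le> c i a"
      unfolding set_cost_def using Sfin by simp
    also have "\<dots> \<le> 1" using assms(4) assms(6) a Ssub by auto
    finally show ?thesis using R key False c0 by simp
  qed
qed

theorem lemma3:
  fixes A :: "'a set" and B T i :: nat and c :: "nat \<Rightarrow> 'a \<Rightarrow> real"
    and rk :: "nat \<Rightarrow> nat \<Rightarrow> 'a"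
  assumes "finite A"
    and "1 \<le> B" and "B \<le> card A"
    and "\<And>t a. t \<in> {1..T} \<Longrightarrow> a \<in> A \<Longrightarrow> 0 \<le> c t a \<and> c t a \<le> 1"
    and "\<And>t. t \<le> T \<Longrightarrow> is_ranking A c t (rk t)"
    and "i \<in> {1..T}"
  shows "regret_R A c rk B i \<le> (\<Sum>t = 1..i. of_bool (rk t 1 \<notin> S_star rk B t))
     \<and> regret_R A c rk B i - regret_R A c rk B (i - 1) \<le> of_bool (rk i 1 \<notin> S_star rk B i)"
proof -
  have Ane: "A \<noteq> {}" using assms(2,3) by auto
  have R0: "regret_R A c rk B 0 = 0"
    unfolding regret_R_def cum_cost_def using Ane assms(1) by simp
  have gen: "n \<le> T \<Longrightarrow> regret_R A c rk B n \<le> (\<Sum>t = 1..n. of_bool (rk t 1 \<notin> S_star rk B t))" for n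
  proof (induction n)
    case 0 then show ?case using R0 by simp
  next
    case (Suc n)
    have "regret_R A c rk B (Suc n) - regret_R A c rk B n \<le> of_bool (rk (Suc n) 1 \<notin> S_star rk B (Suc n))"
      using step[OF assms(1-5), where i="Suc n"] Suc.prems by simp
    moreover have "regret_R A c rk B n \<le> (\<Sum>t = 1..n. of_bool (rk t 1 \<notin> S_star rk B t))"
      using Suc by simp
    ultimately show ?case by simp
  qed
  show ?thesis using gen[of i] assms(6) step[OF assms] by auto
qed

end
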